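(* Let $D_1,\dots,D_n$ be semi-interlaced polytopes in a finite set $\mathbf P\subset\mathbb Z^n$ with $P=\operatorname{Conv}\mathbf P$. Let $S_1,S_2$ be sutures such that $S_1\cap S_2\neq\emptyset$ and $\operatorname{aff}(S_1\cap S_2)=\operatorname{aff}(S_1)\cap\operatorname{aff}(S_2)$. Then both $S_1\cap S_2$ and $P\cap\operatorname{aff}(S_1\cup S_2)$ are sutures.
   Context: **Daughter polytope.** For a nonempty polytope $D$ with vertices in $\mathbf P$, $\mathcal D(D)$ is the set of inclusion-maximal faces of $P$ disjoint from $D$. $D$ is a daughter polytope of $\mathbf P$ if: 1. distinct members of $\mathcal D(D)$ are disjoint; 2. $D=\operatorname{Conv}(\mathbf P\setminus\bigcup_{F\in\mathcal D(D)}F)$. **Semi-interlaced and sutures.** Daughter polytopes $D_1,\dots,D_n$ of $\mathbf P\subset\mathbb Z^n$ are semi-interlaced in $\mathbf P$ if every face $F$ of $P$ meets at least $\dim F$ of them. A face of $P$ meeting exactly $\dim F$ of them is called a suture. *)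

theory Defs
  imports "HOL-Analysis.Analysis"
begin

definition integral_point :: "real^'n \<Rightarrow> bool" where
  "integral_point x \<longleftrightarrow> (\<forall>i. x $ i \<in> \<int>)"

definition max_disjoint_faces :: "(real^'n) set \<Rightarrow> (real^'n) set \<Rightarrow> (real^'n) set set" where
  "max_disjoint_faces Pts D =
     {F. F face_of convex hull Pts \<and> F \<inter> D = {} \<and>
         (\<forall>G. G face_of convex hull Pts \<and> G \<inter> D = {} \<and> F \<subseteq> G \<longrightarrow> G = F)}"

definition daughter_polytope :: "(real^'n) set \<Rightarrow> (real^'n) set \<Rightarrow> bool" where
  "daughter_polytope Pts D \<longleftrightarrow>
     D \<noteq> {} \<and> (\<exists>V. V \<subseteq> Pts \<and> D = convex hull V) \<and>
     (\<forall>F\<in>max_disjoint_faces Pts D. \<forall>G\<in>max_disjoint_faces Pts D. F \<noteq> G \<longrightarrow> F \<inter> G = {}) \<and>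
     D = convex hull (Pts - \<Union>(max_disjoint_faces Pts D))"

definition num_met :: "('n \<Rightarrow> (real^'n) set) \<Rightarrow> (real^'n) set \<Rightarrow> nat" where
  "num_met D F = card {i. D i \<inter> F \<noteq> {}}"

text \<open>Semi-interlaced: the n = CARD('n) polytopes D i (indexed by 'n) are daughter polytopes
  and every face F of P meets at least dim F of them.\<close>
definition semi_interlaced :: "(real^'n) set \<Rightarrow> ('n \<Rightarrow> (real^'n) set) \<Rightarrow> bool" where
  "semi_interlaced Pts D \<longleftrightarrow>
     (\<forall>i. daughter_polytope Pts (D i)) \<and>
     (\<forall>F. F face_of convex hull Pts \<longrightarrow> aff_dim F \<le> int (num_met D F))"

definition suture :: "(real^'n) set \<Rightarrow> ('n \<Rightarrow> (real^'n) set) \<Rightarrow> (real^'n) set \<Rightarrow> bool" where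
  "suture Pts D F \<longleftrightarrow> F face_of convex hull Pts \<and> int (num_met D F) = aff_dim F"

end

theory Submission
  imports Defs
begin

lemma sums_le_union:
  fixes S1 S2 :: "(real^'n) set"
  assumes "S1 \<inter> S2 \<noteq> {}"
  shows "aff_dim {x + y |x y. x \<in> affine hull S1 \<and> y \<in> affine hull S2} \<le> aff_dim (S1 \<union> S2)"
proof -
  obtain a where a: "a \<in> S1" "a \<in> S2" using assms by auto
  let ?A = "affine hull S1" and ?B = "affine hull S2"
  have sub: "{x + y |x y. x \<in> ?A \<and> y \<in> ?B} \<subseteq> (+) a ` (affine hull (S1 \<union> S2))"
  proof
    fix z assume "z \<in> {x + y |x y. x \<in> ?A \<and> y \<in> ?B}"
    then obtain x y where z: "z = x + y" "x \<in> ?A" "y \<in> ?B" by auto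
    have hA: "?A \<subseteq> affine hull (S1 \<union> S2)" by (simp add: hull_mono)
    have hB: "?B \<subseteq> affine hull (S1 \<union> S2)" by (simp add: hull_mono)
    have ax: "a \<in> affine hull (S1 \<union> S2)" using a by (simp add: hull_inc)
    have aff: "affine (affine hull (S1 \<union> S2))" by simp
    have m: "(1/2::real) *\<^sub>R x + (1/2) *\<^sub>R y \<in> affine hull (S1 \<union> S2)"
      by (rule mem_affine[OF aff]) (use hA hB z(2,3) in auto)
    have e: "x + y - a = (2::real) *\<^sub>R ((1/2) *\<^sub>R x + (1/2) *\<^sub>R y) + (1 - 2) *\<^sub>R a"
      by (simp add: algebra_simps scaleR_2)
    have "x + y - a \<in> affine hull (S1 \<union> S2)"
      unfolding e by (rule mem_affine[OF aff m ax]) simp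
    then show "z \<in> (+) a ` (affine hull (S1 \<union> S2))"
      using z by (metis add.commute diff_add_cancel image_eqI)
  qed
  have "aff_dim {x + y |x y. x \<in> ?A \<and> y \<in> ?B} \<le> aff_dim ((+) a ` (affine hull (S1 \<union> S2)))"
    using aff_dim_subset[OF sub] .
  also have "\<dots> = aff_dim (S1 \<union> S2)" by (simp add: aff_dim_translation_eq)
  finally show ?thesis .
qed


lemma exists_max_disj:
  fixes Pts :: "(real^'n) set"
  assumes "finite Pts" "S face_of convex hull Pts" "S \<inter> D = {}"
  shows "\<exists>M\<in>max_disjoint_faces Pts D. S \<subseteq> M"
proof -
  let ?C = "{G. G face_of convex hull Pts \<and> G \<inter> D = {} \<and> S \<subseteq> G}"
  have "polytope (convex hull Pts)" unfolding polytope_def using assms(1) by blast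
  then have "finite {F. F face_of convex hull Pts}" by (rule finite_polytope_faces)
  moreover have "?C \<subseteq> {F. F face_of convex hull Pts}" by blast
  ultimately have fin: "finite ?C" by (rule finite_subset[rotated])
  have "S \<in> ?C" using assms(2,3) by blast
  then have ne: "?C \<noteq> {}" by blast
  from finite_has_maximal[OF fin ne] obtain M where M1: "M \<in> ?C" and M2: "\<forall>b\<in>?C. M \<le> b \<longrightarrow> M = b" ..
  have M: "M \<in> ?C" "\<And>b. b \<in> ?C \<Longrightarrow> M \<subseteq> b \<Longrightarrow> M = b" using M1 M2 by blast+
  have "M \<in> max_disjoint_faces Pts D"
  proof -
    have a: "M face_of convex hull Pts" "M \<inter> D = {}" "S \<subseteq> M" using M(1) by simp_all
    have b: "G = M" if "G face_of convex hull Pts \<and> G \<inter> D = {} \<and> M \<subseteq> G" for G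
    proof -
      have "G \<in> ?C" using that a(3) by auto
      moreover have "M \<subseteq> G" using that by blast
      ultimately have "M = G" by (rule M(2))
      then show "G = M" by simp
    qed
    show ?thesis unfolding max_disjoint_faces_def mem_Collect_eq using a(1,2) b by blast
  qed
  moreover have "S \<subseteq> M" using M(1) by simp
  ultimately show ?thesis by (rule bexI[rotated])
qed

lemma join_disj:
  fixes Pts :: "(real^'n) set"
  assumes "finite Pts" "daughter_polytope Pts Di"
    and "S1 face_of convex hull Pts" "S2 face_of convex hull Pts" "S1 \<inter> S2 \<noteq> {}"
    and "Di \<inter> S1 = {}" "Di \<inter> S2 = {}"
  shows "Di \<inter> \<Inter>{F. F face_of convex hull Pts \<and> S1 \<union> S2 \<subseteq> F} = {}"
proof -
  obtain M1 where M1: "M1 \<in> max_disjoint_faces Pts Di" "S1 \<subseteq> M1"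
    using exists_max_disj[OF assms(1,3)] assms(6) by blast
  obtain M2 where M2: "M2 \<in> max_disjoint_faces Pts Di" "S2 \<subseteq> M2"
    using exists_max_disj[OF assms(1,4)] assms(7) by blast
  have "M1 \<inter> M2 \<noteq> {}" using M1 M2 assms(5) by blast
  moreover have disj: "\<forall>F\<in>max_disjoint_faces Pts Di. \<forall>G\<in>max_disjoint_faces Pts Di. F \<noteq> G \<longrightarrow> F \<inter> G = {}"
    using assms(2) unfolding daughter_polytope_def by (elim conjE)
  ultimately have "M1 = M2" using M1(1) M2(1) by blast
  then have "M1 \<in> {F. F face_of convex hull Pts \<and> S1 \<union> S2 \<subseteq> F}"
    using M1 M2 unfolding max_disjoint_faces_def by blast
  moreover have "M1 \<inter> Di = {}" using M1 unfolding max_disjoint_faces_def by blast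
  ultimately show ?thesis by blast
qed

theorem proposition3p2:
  fixes Pts :: "(real^'n) set" and D :: "'n \<Rightarrow> (real^'n) set" and S1 S2 :: "(real^'n) set"
  assumes "finite Pts" and "\<forall>x\<in>Pts. integral_point x"
    and "semi_interlaced Pts D"
    and "suture Pts D S1" and "suture Pts D S2"
    and "S1 \<inter> S2 \<noteq> {}"
    and "affine hull (S1 \<inter> S2) = affine hull S1 \<inter> affine hull S2"
  shows "suture Pts D (S1 \<inter> S2) \<and> suture Pts D (convex hull Pts \<inter> affine hull (S1 \<union> S2))"
proof -
  let ?P = "convex hull Pts"
  define I where "I F = {i. D i \<inter> F \<noteq> {}}" for F
  have nm: "num_met D F = card (I F)" for F unfolding num_met_def I_def by simp
  have fI: "finite (I F)" for F by simp
  have f1: "S1 face_of ?P" and f2: "S2 face_of ?P" using assms(4,5) unfolding suture_def by auto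
  have d1: "int (card (I S1)) = aff_dim S1" and d2: "int (card (I S2)) = aff_dim S2"
    using assms(4,5) unfolding suture_def nm by auto
  define S where "S = S1 \<inter> S2"
  have fS: "S face_of ?P" unfolding S_def using f1 f2 by (rule face_of_Int)
  define J where "J = \<Inter>{F. F face_of ?P \<and> S1 \<union> S2 \<subseteq> F}"
  have cvx: "convex ?P" by simp
  have fJ: "J face_of ?P" unfolding J_def
    by (rule face_of_Inter) (use face_of_refl[OF cvx] face_of_imp_subset[OF f1] face_of_imp_subset[OF f2] in auto)
  have sJ: "S1 \<union> S2 \<subseteq> J" unfolding J_def by blast
  have semi: "aff_dim F \<le> int (card (I F))" if "F face_of ?P" for F
    using assms(3) that unfolding semi_interlaced_def nm by auto
  have dau: "daughter_polytope Pts (D i)" for i using assms(3) unfolding semi_interlaced_def by auto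
  have IJ: "I J \<subseteq> I S1 \<union> I S2"
  proof
    fix i assume "i \<in> I J"
    then have "D i \<inter> J \<noteq> {}" unfolding I_def by simp
    show "i \<in> I S1 \<union> I S2"
    proof (rule ccontr)
      assume "i \<notin> I S1 \<union> I S2"
      then have "D i \<inter> S1 = {}" "D i \<inter> S2 = {}" unfolding I_def by auto
      from join_disj[OF assms(1) dau f1 f2 assms(6) this] have "D i \<inter> J = {}"
        unfolding J_def .
      with \<open>D i \<inter> J \<noteq> {}\<close> show False by simp
    qed
  qed
  have IS: "I S \<subseteq> I S1 \<inter> I S2" unfolding I_def S_def by blast
  have cUI: "card (I S1) + card (I S2) = card (I S1 \<union> I S2) + card (I S1 \<inter> I S2)"
    by (rule card_Un_Int) simp_all
  have c1: "card (I J) \<le> card (I S1 \<union> I S2)" by (rule card_mono[OF _ IJ]) simp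
  have c2: "card (I S) \<le> card (I S1 \<inter> I S2)" by (rule card_mono[OF _ IS]) simp
  have sS: "aff_dim S \<le> int (card (I S))" using semi[OF fS] .
  have sJJ: "aff_dim J \<le> int (card (I J))" using semi[OF fJ] .
  have "S1 \<inter> S2 \<subseteq> affine hull S1 \<inter> affine hull S2"
    using hull_subset[of S1 affine] hull_subset[of S2 affine] by blast
  then have ne: "affine hull S1 \<inter> affine hull S2 \<noteq> {}" using assms(6) by blast
  have sums: "aff_dim {x + y |x y. x \<in> affine hull S1 \<and> y \<in> affine hull S2}
      = aff_dim S1 + aff_dim S2 - aff_dim S"
    using aff_dim_sums_Int[OF affine_affine_hull affine_affine_hull ne]
    unfolding assms(7)[symmetric] aff_dim_affine_hull S_def .
  have u: "aff_dim S1 + aff_dim S2 - aff_dim S \<le> aff_dim (S1 \<union> S2)"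
    using sums_le_union[OF assms(6)] sums by simp
  have uJ: "aff_dim (S1 \<union> S2) \<le> aff_dim J" by (rule aff_dim_subset[OF sJ])
  have eqS: "int (card (I S)) = aff_dim S" using sS c1 c2 cUI d1 d2 u uJ sJJ by linarith
  have eqJ: "aff_dim (S1 \<union> S2) = aff_dim J" using sS c1 c2 cUI d1 d2 u uJ sJJ by linarith
  have eqJ2: "int (card (I J)) = aff_dim J" using sS c1 c2 cUI d1 d2 u uJ sJJ by linarith
  have "affine hull (S1 \<union> S2) = affine hull J"
    by (rule affine_dim_equal) (use assms(6) eqJ hull_mono[OF sJ] in auto)
  then have "?P \<inter> affine hull (S1 \<union> S2) = affine hull J \<inter> ?P" by (simp add: Int_commute)
  also have "\<dots> = J" using face_of_imp_eq_affine_Int[OF cvx fJ] by simp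
  finally have TJ: "?P \<inter> affine hull (S1 \<union> S2) = J" .
  have "suture Pts D S" unfolding suture_def nm using fS eqS by simp
  moreover have "suture Pts D J" unfolding suture_def nm using fJ eqJ2 by simp
  ultimately show ?thesis unfolding TJ S_def by simp
qed

end
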